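(* Let $\mathcal{V}$ be an entropic Jónsson–Tarski variety and $A$ a $\mathcal{V}$-algebra. Then: (1) $Inv(A)$ is a $\mathcal{V}$-subalgebra of $A$ (with embedding $\upsilon_A$) and hence an internal submonoid of the internal monoid $(A,+^A,0)$. (2) Every $\mathcal{V}$-homomorphism $f\colon A\to B$ restricts and corestricts to a $\mathcal{V}$-homomorphism $Inv(A)\to Inv(B)$. In particular, for every $\mathcal{V}$-algebra $B$ and every $b\in B$, the homomorphism $b_r\colon A\to A\otimes B$, $a\mapsto a\otimes b$, restricts to a homomorphism $Inv(A)\to Inv(A\otimes B)$; hence $\upsilon_A\otimes\upsilon_B$ factors as $Inv(A)\otimes Inv(B)\xrightarrow{\upsilon_{A,B}} Inv(A\otimes B)\hookrightarrow A\otimes B$; moreover, for every monoid $(A,m,e)$ in $\mathcal{V}$ and all $a,b\in Inv(A)$ one has $m(a\otimes b)\in Inv(A)$. (3) For every $\mathcal{V}$-homomorphism $f\colon A\to B$ and every $x\in Inv(A)$ one has $f(-x)=-f(x)$. (4) The map $i\colon Inv(A)\to Inv(A)$, $x\mapsto -x$, is a $\mathcal{V}$-homomorphism. Consequently $Inv(A)$ is a commutative internal group in $\mathcal{V}$, and in fact the largest internal group contained in $A$.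
   Context: A variety is a finitary one-sorted variety of algebras. It is entropic if its algebraic theory is commutative (every operation is a homomorphism); then it is a symmetric monoidal closed category under the entropic tensor product $A\otimes B$, characterized by a bimorphism $A\times B\to A\otimes B$, $(a,b)\mapsto a\otimes b$, through which every bimorphism (map homomorphic in each variable separately) $A\times B\to C$ factors uniquely via a homomorphism $A\otimes B\to C$; the unit object is the free algebra $F1$ on one generator. A Jónsson–Tarski variety has a nullary operation $0$ and a binary operation $+$ with $x+0=x=0+x$; in an entropic one, $(A,+^A,0)$ is a commutative internal monoid in $\mathcal{V}$. An element $x\in A$ is invertible if there is $y\in A$ with $x+y=0=y+x$; such $y$ is unique and denoted $-x$. $Inv(A)$ denotes the set of invertible elements of $A$. A monoid in $\mathcal{V}$ is a triple $(A,m,e)$ with homomorphisms $m\colon A\otimes A\to A$, $e\colon F1\to A$ satisfying associativity and unit laws. An internal group in $\mathcal{V}$ is a group object in the category $\mathcal{V}$ (with respect to finite products). *)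

theory Defs
  imports Main
begin

datatype ('f, 'v) trm = Var 'v | App 'f "('f, 'v) trm list"

fun wf_trm :: "('f \<Rightarrow> nat) \<Rightarrow> ('f, 'v) trm \<Rightarrow> bool" where
  "wf_trm ar (Var v) = True"
| "wf_trm ar (App f ts) = (length ts = ar f \<and> (\<forall>t\<in>set ts. wf_trm ar t))"

fun subst :: "('v \<Rightarrow> ('f, 'w) trm) \<Rightarrow> ('f, 'v) trm \<Rightarrow> ('f, 'w) trm" where
  "subst \<sigma> (Var v) = \<sigma> v"
| "subst \<sigma> (App f ts) = App f (map (subst \<sigma>) ts)"

record ('f, 'a) alg =
  acar :: "'a set"
  aop :: "'f \<Rightarrow> 'a list \<Rightarrow> 'a"

fun eval :: "('f, 'a) alg \<Rightarrow> ('v \<Rightarrow> 'a) \<Rightarrow> ('f, 'v) trm \<Rightarrow> 'a" where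
  "eval A \<sigma> (Var v) = \<sigma> v"
| "eval A \<sigma> (App f ts) = aop A f (map (eval A \<sigma>) ts)"

definition is_alg :: "('f \<Rightarrow> nat) \<Rightarrow> ('f, 'a) alg \<Rightarrow> bool" where
  "is_alg ar A \<longleftrightarrow>
     (\<forall>f xs. length xs = ar f \<and> set xs \<subseteq> acar A \<longrightarrow> aop A f xs \<in> acar A)"

definition in_var :: "('f \<Rightarrow> nat) \<Rightarrow> (('f, nat) trm \<times> ('f, nat) trm) set
     \<Rightarrow> ('f, 'a) alg \<Rightarrow> bool" where
  "in_var ar E A \<longleftrightarrow> is_alg ar A \<and>
     (\<forall>(l, r)\<in>E. \<forall>\<sigma>. (\<forall>v. \<sigma> v \<in> acar A) \<longrightarrow> eval A \<sigma> l = eval A \<sigma> r)"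

inductive deriv :: "('f \<Rightarrow> nat) \<Rightarrow> (('f, nat) trm \<times> ('f, nat) trm) set
     \<Rightarrow> ('f, nat) trm \<Rightarrow> ('f, nat) trm \<Rightarrow> bool"
  for ar E where
  ax: "(l, r) \<in> E \<Longrightarrow> (\<forall>v. wf_trm ar (\<sigma> v)) \<Longrightarrow> deriv ar E (subst \<sigma> l) (subst \<sigma> r)"
| refl: "wf_trm ar t \<Longrightarrow> deriv ar E t t"
| sym: "deriv ar E t u \<Longrightarrow> deriv ar E u t"
| trans: "deriv ar E t u \<Longrightarrow> deriv ar E u w \<Longrightarrow> deriv ar E t w"
| cong: "length ts = ar f \<Longrightarrow> list_all2 (deriv ar E) ts us \<Longrightarrow> deriv ar E (App f ts) (App f us)"

definition variety :: "('f \<Rightarrow> nat) \<Rightarrow> (('f, nat) trm \<times> ('f, nat) trm) set \<Rightarrow> bool" where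
  "variety ar E \<longleftrightarrow> (\<forall>(l, r)\<in>E. wf_trm ar l \<and> wf_trm ar r)"

text \<open>Entropic: for all operations f (arity n) and g (arity m) the theory proves
  f(g(x_11..x_1m),...,g(x_n1..x_nm)) = g(f(x_11..x_n1),...,f(x_1m..x_nm)),
  with x_ij encoded as the variable i*m+j.\<close>

definition ent_lhs :: "('f \<Rightarrow> nat) \<Rightarrow> 'f \<Rightarrow> 'f \<Rightarrow> ('f, nat) trm" where
  "ent_lhs ar f g = App f (map (\<lambda>i. App g (map (\<lambda>j. Var (i * ar g + j)) [0..<ar g])) [0..<ar f])"

definition ent_rhs :: "('f \<Rightarrow> nat) \<Rightarrow> 'f \<Rightarrow> 'f \<Rightarrow> ('f, nat) trm" where
  "ent_rhs ar f g = App g (map (\<lambda>j. App f (map (\<lambda>i. Var (i * ar g + j)) [0..<ar f])) [0..<ar g])"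

definition entropic :: "('f \<Rightarrow> nat) \<Rightarrow> (('f, nat) trm \<times> ('f, nat) trm) set \<Rightarrow> bool" where
  "entropic ar E \<longleftrightarrow> (\<forall>f g. deriv ar E (ent_lhs ar f g) (ent_rhs ar f g))"

definition jonsson_tarski :: "('f \<Rightarrow> nat) \<Rightarrow> (('f, nat) trm \<times> ('f, nat) trm) set
     \<Rightarrow> 'f \<Rightarrow> 'f \<Rightarrow> bool" where
  "jonsson_tarski ar E z p \<longleftrightarrow> ar z = 0 \<and> ar p = 2 \<and>
     deriv ar E (App p [Var 0, App z []]) (Var 0) \<and>
     deriv ar E (App p [App z [], Var 0]) (Var 0)"

definition hom :: "('f \<Rightarrow> nat) \<Rightarrow> ('f, 'a) alg \<Rightarrow> ('f, 'b) alg \<Rightarrow> ('a \<Rightarrow> 'b) \<Rightarrow> bool" where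
  "hom ar A B h \<longleftrightarrow> (\<forall>x\<in>acar A. h x \<in> acar B) \<and>
     (\<forall>f xs. length xs = ar f \<and> set xs \<subseteq> acar A \<longrightarrow> h (aop A f xs) = aop B f (map h xs))"

definition subalg :: "('f \<Rightarrow> nat) \<Rightarrow> 'a set \<Rightarrow> ('f, 'a) alg \<Rightarrow> bool" where
  "subalg ar S A \<longleftrightarrow> S \<subseteq> acar A \<and>
     (\<forall>f xs. length xs = ar f \<and> set xs \<subseteq> S \<longrightarrow> aop A f xs \<in> S)"

definition restr :: "('f, 'a) alg \<Rightarrow> 'a set \<Rightarrow> ('f, 'a) alg" where
  "restr A S = \<lparr>acar = S, aop = aop A\<rparr>"

definition prod_alg :: "('f, 'a) alg \<Rightarrow> ('f, 'b) alg \<Rightarrow> ('f, 'a \<times> 'b) alg" where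
  "prod_alg A B = \<lparr>acar = acar A \<times> acar B,
     aop = (\<lambda>f xs. (aop A f (map fst xs), aop B f (map snd xs)))\<rparr>"

definition term_alg :: "('f, unit) alg" where
  "term_alg = \<lparr>acar = {()}, aop = (\<lambda>f xs. ())\<rparr>"

definition bimor :: "('f \<Rightarrow> nat) \<Rightarrow> ('f, 'a) alg \<Rightarrow> ('f, 'b) alg \<Rightarrow> ('f, 'c) alg
     \<Rightarrow> ('a \<Rightarrow> 'b \<Rightarrow> 'c) \<Rightarrow> bool" where
  "bimor ar A B C h \<longleftrightarrow> (\<forall>a\<in>acar A. hom ar B C (h a)) \<and> (\<forall>b\<in>acar B. hom ar A C (\<lambda>a. h a b))"

text \<open>HOL cannot quantify over types inside a formula, so C ranges over
  V-algebras whose carrier type is that of T.\<close>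

definition is_tensor :: "('f \<Rightarrow> nat) \<Rightarrow> (('f, nat) trm \<times> ('f, nat) trm) set
     \<Rightarrow> ('f, 'a) alg \<Rightarrow> ('f, 'b) alg \<Rightarrow> ('f, 'c) alg \<Rightarrow> ('a \<Rightarrow> 'b \<Rightarrow> 'c) \<Rightarrow> bool" where
  "is_tensor ar E A B T t \<longleftrightarrow> in_var ar E A \<and> in_var ar E B \<and> in_var ar E T \<and>
     bimor ar A B T t \<and>
     (\<forall>(C :: ('f, 'c) alg) h. in_var ar E C \<and> bimor ar A B C h \<longrightarrow>
        (\<exists>g. hom ar T C g \<and> (\<forall>a\<in>acar A. \<forall>b\<in>acar B. g (t a b) = h a b) \<and>
           (\<forall>g'. hom ar T C g' \<and> (\<forall>a\<in>acar A. \<forall>b\<in>acar B. g' (t a b) = h a b)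
                 \<longrightarrow> (\<forall>x\<in>acar T. g' x = g x))))"

text \<open>A monoid (M, m, e) in (V, \<otimes>, F1): (T, t) is a tensor product M \<otimes> M,
  m : M \<otimes> M \<rightarrow> M a homomorphism, and the unit e : F1 \<rightarrow> M is given by the
  image u of the free generator.  Associativity and unit laws are stated on
  generators of the tensor products (pure tensors), which is equivalent to the
  diagrammatic laws since the tensor products are generated by pure tensors.\<close>

definition monoid_in :: "('f \<Rightarrow> nat) \<Rightarrow> (('f, nat) trm \<times> ('f, nat) trm) set
     \<Rightarrow> ('f, 'a) alg \<Rightarrow> ('f, 'c) alg \<Rightarrow> ('a \<Rightarrow> 'a \<Rightarrow> 'c) \<Rightarrow> ('c \<Rightarrow> 'a) \<Rightarrow> 'a \<Rightarrow> bool" where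
  "monoid_in ar E M T t m u \<longleftrightarrow> is_tensor ar E M M T t \<and> hom ar T M m \<and> u \<in> acar M \<and>
     (\<forall>a\<in>acar M. \<forall>b\<in>acar M. \<forall>c\<in>acar M. m (t (m (t a b)) c) = m (t a (m (t b c)))) \<and>
     (\<forall>a\<in>acar M. m (t u a) = a \<and> m (t a u) = a)"

definition plus :: "'f \<Rightarrow> ('f, 'a) alg \<Rightarrow> 'a \<Rightarrow> 'a \<Rightarrow> 'a" where
  "plus p A x y = aop A p [x, y]"

definition zero :: "'f \<Rightarrow> ('f, 'a) alg \<Rightarrow> 'a" where
  "zero z A = aop A z []"

definition Inv :: "'f \<Rightarrow> 'f \<Rightarrow> ('f, 'a) alg \<Rightarrow> 'a set" where
  "Inv z p A = {x \<in> acar A. \<exists>y\<in>acar A. plus p A x y = zero z A \<and> plus p A y x = zero z A}"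

definition neg :: "'f \<Rightarrow> 'f \<Rightarrow> ('f, 'a) alg \<Rightarrow> 'a \<Rightarrow> 'a" where
  "neg z p A x = (THE y. y \<in> acar A \<and> plus p A x y = zero z A \<and> plus p A y x = zero z A)"

text \<open>Internal group in V (group object w.r.t. finite products): multiplication
  G \<times> G \<rightarrow> G, unit 1 \<rightarrow> G (1 the terminal algebra, the map picks u) and inverse
  G \<rightarrow> G are homomorphisms satisfying the group laws.\<close>

definition group_obj :: "('f \<Rightarrow> nat) \<Rightarrow> (('f, nat) trm \<times> ('f, nat) trm) set
     \<Rightarrow> ('f, 'a) alg \<Rightarrow> ('a \<Rightarrow> 'a \<Rightarrow> 'a) \<Rightarrow> 'a \<Rightarrow> ('a \<Rightarrow> 'a) \<Rightarrow> bool" where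
  "group_obj ar E G m u i \<longleftrightarrow> in_var ar E G \<and>
     hom ar (prod_alg G G) G (case_prod m) \<and> hom ar term_alg G (\<lambda>_. u) \<and> hom ar G G i \<and>
     (\<forall>x\<in>acar G. \<forall>y\<in>acar G. \<forall>w\<in>acar G. m (m x y) w = m x (m y w)) \<and>
     (\<forall>x\<in>acar G. m u x = x \<and> m x u = x) \<and>
     (\<forall>x\<in>acar G. m x (i x) = u \<and> m (i x) x = u)"

definition comm_group_obj :: "('f \<Rightarrow> nat) \<Rightarrow> (('f, nat) trm \<times> ('f, nat) trm) set
     \<Rightarrow> ('f, 'a) alg \<Rightarrow> ('a \<Rightarrow> 'a \<Rightarrow> 'a) \<Rightarrow> 'a \<Rightarrow> ('a \<Rightarrow> 'a) \<Rightarrow> bool" where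
  "comm_group_obj ar E G m u i \<longleftrightarrow> group_obj ar E G m u i \<and>
     (\<forall>x\<in>acar G. \<forall>y\<in>acar G. m x y = m y x)"

end

theory Submission
  imports Defs
begin


lemma eval_in:
  assumes "is_alg ar A" "\<forall>v. \<sigma> v \<in> acar A"
  shows "wf_trm ar t \<Longrightarrow> eval A \<sigma> t \<in> acar A"
proof (induction t)
  case (Var x) then show ?case using assms by simp
next
  case (App f ts)
  then have "set (map (eval A \<sigma>) ts) \<subseteq> acar A" by auto
  then show ?case using assms(1) App(2) unfolding is_alg_def by auto
qed

lemma eval_subst: "eval A \<sigma> (subst \<tau> t) = eval A (\<lambda>v. eval A \<sigma> (\<tau> v)) t"
  by (induction t) (auto intro!: arg_cong[where f="aop A _"] map_cong)

lemma eval_restr: "eval (restr A S) \<sigma> t = eval A \<sigma> t"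
  by (induction t) (auto simp: restr_def intro!: arg_cong[where f="aop A _"] map_cong)

lemma sound:
  assumes "deriv ar E l r" "in_var ar E A" "\<forall>v. \<sigma> v \<in> acar A"
  shows "eval A \<sigma> l = eval A \<sigma> r"
  using assms(1)
proof (induction rule: deriv.induct)
  case (ax l r \<tau>)
  have c: "\<forall>v. eval A \<sigma> (\<tau> v) \<in> acar A"
    using eval_in assms(2,3) ax(2) unfolding in_var_def by blast
  from assms(2) ax(1) c have "eval A (\<lambda>v. eval A \<sigma> (\<tau> v)) l = eval A (\<lambda>v. eval A \<sigma> (\<tau> v)) r"
    unfolding in_var_def by fastforce
  then show ?case by (simp add: eval_subst)
next
  case (cong ts f us)
  from cong(2) have "map (eval A \<sigma>) ts = map (eval A \<sigma>) us"
    by (induction ts us rule: list_all2_induct) auto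
  then show ?case by simp
qed auto

locale JT =
  fixes ar :: "'f \<Rightarrow> nat" and E :: "(('f, nat) trm \<times> ('f, nat) trm) set" and z p :: 'f
  assumes ent: "entropic ar E" and jt: "jonsson_tarski ar E z p"
begin

lemma arz: "ar z = 0" and arp: "ar p = 2" using jt unfolding jonsson_tarski_def by auto

lemma zero_in: "in_var ar E A \<Longrightarrow> zero z A \<in> acar A"
  unfolding in_var_def is_alg_def zero_def using arz by auto

lemma plus_in: "in_var ar E A \<Longrightarrow> x \<in> acar A \<Longrightarrow> y \<in> acar A \<Longrightarrow> plus p A x y \<in> acar A"
  unfolding in_var_def is_alg_def plus_def using arp by auto

lemma plus_0r: assumes "in_var ar E A" "x \<in> acar A" shows "plus p A x (zero z A) = x"
proof -
  have "deriv ar E (App p [Var 0, App z []]) (Var 0)" using jt unfolding jonsson_tarski_def by auto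
  from sound[OF this assms(1), of "\<lambda>v. x"] assms show ?thesis by (simp add: plus_def zero_def)
qed

lemma plus_0l: assumes "in_var ar E A" "x \<in> acar A" shows "plus p A (zero z A) x = x"
proof -
  have "deriv ar E (App p [App z [], Var 0]) (Var 0)" using jt unfolding jonsson_tarski_def by auto
  from sound[OF this assms(1), of "\<lambda>v. x"] assms show ?thesis by (simp add: plus_def zero_def)
qed

lemma interchange:
  assumes "in_var ar E A" "a \<in> acar A" "b \<in> acar A" "c \<in> acar A" "d \<in> acar A"
  shows "plus p A (plus p A a b) (plus p A c d) = plus p A (plus p A a c) (plus p A b d)"
proof -
  have "deriv ar E (ent_lhs ar p p) (ent_rhs ar p p)" using ent unfolding entropic_def by auto
  from sound[OF this assms(1), of "\<lambda>v. if v = 0 then a else if v = 1 then b else if v = 2 then c else d"] assms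
  show ?thesis by (simp add: plus_def ent_lhs_def ent_rhs_def arp numeral_2_eq_2)
qed

lemma plus_comm: assumes "in_var ar E A" "a \<in> acar A" "b \<in> acar A"
  shows "plus p A a b = plus p A b a"
  using interchange[OF assms(1) zero_in[OF assms(1)] assms(2) assms(3) zero_in[OF assms(1)]]
  by (simp add: plus_0l plus_0r assms)

lemma plus_assoc: assumes "in_var ar E A" "a \<in> acar A" "b \<in> acar A" "c \<in> acar A"
  shows "plus p A (plus p A a b) c = plus p A a (plus p A b c)"
  using interchange[OF assms(1) assms(2) assms(3) zero_in[OF assms(1)] assms(4)]
  by (simp add: plus_0l plus_0r assms)

lemma op_plus:
  assumes A: "in_var ar E A" and a: "\<forall>i<ar f. a i \<in> acar A" and b: "\<forall>i<ar f. b i \<in> acar A"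
  shows "aop A f (map (\<lambda>i. plus p A (a i) (b i)) [0..<ar f])
       = plus p A (aop A f (map a [0..<ar f])) (aop A f (map b [0..<ar f]))"
proof -
  define a' where "a' i = (if i < ar f then a i else zero z A)" for i
  define b' where "b' i = (if i < ar f then b i else zero z A)" for i
  define \<sigma> where "\<sigma> v = (if even v then a' (v div 2) else b' (v div 2))" for v
  have s: "\<forall>v. \<sigma> v \<in> acar A" using a b zero_in[OF A] by (auto simp: \<sigma>_def a'_def b'_def)
  have "deriv ar E (ent_lhs ar f p) (ent_rhs ar f p)" using ent unfolding entropic_def by auto
  from sound[OF this A s]
  have e: "aop A f (map (\<lambda>i. plus p A (\<sigma> (i*2)) (\<sigma> (i*2+1))) [0..<ar f])
       = plus p A (aop A f (map (\<lambda>i. \<sigma> (i*2)) [0..<ar f])) (aop A f (map (\<lambda>i. \<sigma> (i*2+1)) [0..<ar f]))"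
    by (simp add: plus_def ent_lhs_def ent_rhs_def arp numeral_2_eq_2 comp_def)
  moreover have e1: "map (\<lambda>i. plus p A (\<sigma> (i*2)) (\<sigma> (i*2+1))) [0..<ar f] = map (\<lambda>i. plus p A (a i) (b i)) [0..<ar f]"
    by (auto simp: \<sigma>_def a'_def b'_def)
  moreover have e2: "map (\<lambda>i. \<sigma> (i*2)) [0..<ar f] = map a [0..<ar f]"
    by (auto simp: \<sigma>_def a'_def b'_def)
  moreover have e3: "map (\<lambda>i. \<sigma> (i*2+1)) [0..<ar f] = map b [0..<ar f]"
    by (auto simp: \<sigma>_def a'_def b'_def)
  ultimately show ?thesis by (simp only:)
qed

lemma op_zero:
  assumes A: "in_var ar E A"
  shows "aop A f (map (\<lambda>i. zero z A) [0..<ar f]) = zero z A"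
proof -
  have "deriv ar E (ent_lhs ar f z) (ent_rhs ar f z)" using ent unfolding entropic_def by auto
  from sound[OF this A, of "\<lambda>v. zero z A"] zero_in[OF A]
  show ?thesis by (simp add: zero_def ent_lhs_def ent_rhs_def arz comp_def)
qed

lemma hom_plus: "hom ar A B h \<Longrightarrow> x \<in> acar A \<Longrightarrow> y \<in> acar A \<Longrightarrow> h (plus p A x y) = plus p B (h x) (h y)"
proof -
  assume h: "hom ar A B h" and xy: "x \<in> acar A" "y \<in> acar A"
  have "length [x, y] = ar p" "set [x,y] \<subseteq> acar A" using arp xy by auto
  then show ?thesis using h unfolding hom_def plus_def by simp
qed

lemma hom_zero: "hom ar A B h \<Longrightarrow> h (zero z A) = zero z B"
  unfolding hom_def zero_def using arz by fastforce

lemma inv_unique: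
  assumes A: "in_var ar E A" and c: "x \<in> acar A" "y \<in> acar A" "y' \<in> acar A"
    and e: "plus p A x y = zero z A" "plus p A x y' = zero z A"
  shows "y = y'"
proof -
  have "y = plus p A y (plus p A x y')" using e(2) plus_0r[OF A c(2)] by simp
  also have "\<dots> = plus p A (plus p A y x) y'" using plus_assoc[OF A c(2) c(1) c(3)] by simp
  also have "\<dots> = plus p A (plus p A x y) y'" using plus_comm[OF A c(2) c(1)] by simp
  also have "\<dots> = y'" using e(1) plus_0l[OF A c(3)] by simp
  finally show ?thesis .
qed

lemma Inv_iff: "in_var ar E A \<Longrightarrow> x \<in> Inv z p A \<longleftrightarrow> x \<in> acar A \<and> (\<exists>y\<in>acar A. plus p A x y = zero z A)"
proof -
  assume A: "in_var ar E A"
  show ?thesis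
  proof
    assume "x \<in> Inv z p A" then show "x \<in> acar A \<and> (\<exists>y\<in>acar A. plus p A x y = zero z A)"
      unfolding Inv_def by blast
  next
    assume r: "x \<in> acar A \<and> (\<exists>y\<in>acar A. plus p A x y = zero z A)"
    then obtain y where "y \<in> acar A" "plus p A x y = zero z A" by blast
    moreover have "plus p A y x = plus p A x y" using plus_comm[OF A] r calculation by blast
    ultimately show "x \<in> Inv z p A" using r unfolding Inv_def by auto
  qed
qed

lemma neg_prop:
  assumes A: "in_var ar E A" and x: "x \<in> Inv z p A"
  shows "neg z p A x \<in> acar A \<and> plus p A x (neg z p A x) = zero z A \<and> plus p A (neg z p A x) x = zero z A"
proof -
  from x obtain y where y: "y \<in> acar A" "plus p A x y = zero z A" "plus p A y x = zero z A"
    unfolding Inv_def by auto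
  have xc: "x \<in> acar A" using x unfolding Inv_def by blast
  have "\<exists>!y. y \<in> acar A \<and> plus p A x y = zero z A \<and> plus p A y x = zero z A"
  proof (rule ex1I)
    show "y \<in> acar A \<and> plus p A x y = zero z A \<and> plus p A y x = zero z A" using y by blast
  next
    fix w assume "w \<in> acar A \<and> plus p A x w = zero z A \<and> plus p A w x = zero z A"
    then show "w = y" using inv_unique[OF A xc _ y(1) _ y(2)] by blast
  qed
  then show ?thesis unfolding neg_def by (rule theI')
qed

lemma neg_eq:
  assumes A: "in_var ar E A" and x: "x \<in> Inv z p A" and y: "y \<in> acar A" "plus p A x y = zero z A"
  shows "neg z p A x = y"
proof -
  have xc: "x \<in> acar A" using x unfolding Inv_def by blast
  show ?thesis using inv_unique[OF A xc _ y(1) _ y(2)] neg_prop[OF A x] by blast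
qed

lemma neg_Inv: "in_var ar E A \<Longrightarrow> x \<in> Inv z p A \<Longrightarrow> neg z p A x \<in> Inv z p A"
proof -
  assume A: "in_var ar E A" and x: "x \<in> Inv z p A"
  have xc: "x \<in> acar A" using x unfolding Inv_def by blast
  show ?thesis using neg_prop[OF A x] xc unfolding Inv_def by blast
qed

lemma op_Inv_neg:
  assumes A: "in_var ar E A" and l: "length xs = ar f" and s: "set xs \<subseteq> Inv z p A"
  shows "aop A f xs \<in> Inv z p A \<and> neg z p A (aop A f xs) = aop A f (map (neg z p A) xs)"
proof -
  have sc: "set xs \<subseteq> acar A" using s unfolding Inv_def by auto
  have xi: "\<forall>i<ar f. xs!i \<in> Inv z p A" using s l nth_mem by (metis subsetD)
  have a: "\<forall>i<ar f. xs!i \<in> acar A" using sc l nth_mem by (metis subsetD)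
  have b: "\<forall>i<ar f. neg z p A (xs!i) \<in> acar A" using neg_prop[OF A] xi by blast
  have m1: "map (\<lambda>i. xs!i) [0..<ar f] = xs" using l by (metis map_nth)
  have m2: "map (\<lambda>i. neg z p A (xs!i)) [0..<ar f] = map (neg z p A) xs"
    by (subst m1[symmetric]) (simp only: map_map comp_def)
  have m3: "map (\<lambda>i. plus p A (xs!i) (neg z p A (xs!i))) [0..<ar f] = map (\<lambda>i. zero z A) [0..<ar f]"
    using neg_prop[OF A] xi by (intro map_cong) auto
  have eq: "plus p A (aop A f xs) (aop A f (map (neg z p A) xs)) = zero z A"
    using op_plus[OF A a b] op_zero[OF A, of f] unfolding m1 m2 m3 by simp
  have c1: "aop A f xs \<in> acar A" using A sc l unfolding in_var_def is_alg_def by auto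
  have "set (map (neg z p A) xs) \<subseteq> acar A" using neg_prop[OF A] s by auto
  then have c2: "aop A f (map (neg z p A) xs) \<in> acar A" using A l unfolding in_var_def is_alg_def by auto
  have I: "aop A f xs \<in> Inv z p A" using Inv_iff[OF A] c1 c2 eq by auto
  show ?thesis using I neg_eq[OF A I c2 eq] by auto
qed

lemma subalg_Inv: "in_var ar E A \<Longrightarrow> subalg ar (Inv z p A) A"
  unfolding subalg_def using op_Inv_neg by (auto simp: Inv_def)

lemma in_var_restr: assumes "in_var ar E A" "subalg ar S A" shows "in_var ar E (restr A S)"
proof -
  have "is_alg ar (restr A S)" using assms(2) unfolding is_alg_def subalg_def by (simp add: restr_def)
  moreover have "acar (restr A S) \<subseteq> acar A" using assms(2) unfolding subalg_def by (simp add: restr_def)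
  ultimately show ?thesis using assms(1) unfolding in_var_def eval_restr by blast
qed

lemma hom_Inv:
  assumes A: "in_var ar E A" and B: "in_var ar E B" and h: "hom ar A B h" and x: "x \<in> Inv z p A"
  shows "h x \<in> Inv z p B"
proof -
  have n: "neg z p A x \<in> acar A" "plus p A x (neg z p A x) = zero z A" using neg_prop[OF A x] by auto
  have xc: "x \<in> acar A" using x unfolding Inv_def by auto
  have "plus p B (h x) (h (neg z p A x)) = zero z B"
    using hom_plus[OF h xc n(1)] n(2) hom_zero[OF h] by simp
  moreover have "h x \<in> acar B" "h (neg z p A x) \<in> acar B" using h xc n unfolding hom_def by auto
  ultimately show ?thesis using Inv_iff[OF B] by auto
qed

lemma hom_neg:
  assumes A: "in_var ar E A" and B: "in_var ar E B" and h: "hom ar A B h" and x: "x \<in> Inv z p A"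
  shows "h (neg z p A x) = neg z p B (h x)"
proof -
  have n: "neg z p A x \<in> acar A" "plus p A x (neg z p A x) = zero z A" using neg_prop[OF A x] by auto
  have xc: "x \<in> acar A" using x unfolding Inv_def by auto
  have "plus p B (h x) (h (neg z p A x)) = zero z B"
    using hom_plus[OF h xc n(1)] n(2) hom_zero[OF h] by simp
  moreover have "h (neg z p A x) \<in> acar B" using h n unfolding hom_def by auto
  ultimately show ?thesis using neg_eq[OF B hom_Inv[OF A B h x]] by auto
qed

lemma hom_restr_Inv:
  assumes A: "in_var ar E A" and B: "in_var ar E B" and h: "hom ar A B h"
  shows "hom ar (restr A (Inv z p A)) (restr B (Inv z p B)) h"
proof -
  have "Inv z p A \<subseteq> acar A" unfolding Inv_def by blast
  then show ?thesis using hom_Inv[OF A B h] h unfolding hom_def by (auto simp: restr_def)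
qed


lemma hom_comp: "hom ar A B f \<Longrightarrow> hom ar B C g \<Longrightarrow> hom ar A C (\<lambda>x. g (f x))"
proof -
  assume f: "hom ar A B f" and g: "hom ar B C g"
  show ?thesis unfolding hom_def
  proof (intro conjI allI impI ballI)
    fix x assume "x \<in> acar A" then show "g (f x) \<in> acar C" using f g unfolding hom_def by blast
  next
    fix h xs assume a: "length xs = ar h \<and> set xs \<subseteq> acar A"
    then have "set (map f xs) \<subseteq> acar B" using f unfolding hom_def by auto
    then have "g (aop B h (map f xs)) = aop C h (map g (map f xs))" using g a unfolding hom_def by simp
    moreover have "f (aop A h xs) = aop B h (map f xs)" using f a unfolding hom_def by blast
    ultimately show "g (f (aop A h xs)) = aop C h (map (\<lambda>x. g (f x)) xs)" by (simp add: comp_def)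
  qed
qed

lemma hom_id: "hom ar P P (\<lambda>x. x)"
  unfolding hom_def by simp

lemma tensor_gen:
  assumes T: "is_tensor ar E A' B' P s" and S: "subalg ar S P"
    and st: "\<forall>a\<in>acar A'. \<forall>b\<in>acar B'. s a b \<in> S"
  shows "acar P \<subseteq> S"
proof -
  have P: "in_var ar E P" and bi: "bimor ar A' B' P s" using T unfolding is_tensor_def by auto
  have SP: "S \<subseteq> acar P" using S unfolding subalg_def by blast
  have R: "in_var ar E (restr P S)" using in_var_restr[OF P S] .
  have bi2: "bimor ar A' B' (restr P S) s"
    using bi st unfolding bimor_def hom_def by (auto simp: restr_def)
  from T R bi2 obtain k where k: "hom ar P (restr P S) k" "\<forall>a\<in>acar A'. \<forall>b\<in>acar B'. k (s a b) = s a b"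
    unfolding is_tensor_def by blast
  have kP: "hom ar P P k" using k(1) SP unfolding hom_def by (auto simp: restr_def)
  from T P bi obtain g0 where g0: "\<forall>g'. hom ar P P g' \<and> (\<forall>a\<in>acar A'. \<forall>b\<in>acar B'. g' (s a b) = s a b)
                 \<longrightarrow> (\<forall>x\<in>acar P. g' x = g0 x)"
    unfolding is_tensor_def by blast
  have e1: "\<forall>x\<in>acar P. k x = g0 x" using g0 kP k(2) by blast
  have e2: "\<forall>x\<in>acar P. x = g0 x" using g0 hom_id[of P] by blast
  show ?thesis
  proof
    fix x assume x: "x \<in> acar P"
    have "k x \<in> S" using k(1) x unfolding hom_def by (simp add: restr_def)
    then show "x \<in> S" using e1 e2 x by metis
  qed
qed

lemma Inv_sub: "Inv z p A \<subseteq> acar A" unfolding Inv_def by blast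


lemma op_plus_list:
  assumes A: "in_var ar E A" and l: "length xs = ar f" and s: "set xs \<subseteq> acar A \<times> acar A"
  shows "aop A f (map (\<lambda>(x,y). plus p A x y) xs) = plus p A (aop A f (map fst xs)) (aop A f (map snd xs))"
proof -
  have a: "\<forall>i<ar f. fst (xs!i) \<in> acar A" "\<forall>i<ar f. snd (xs!i) \<in> acar A"
  proof -
    have "\<forall>i<ar f. xs!i \<in> acar A \<times> acar A" proof (intro allI impI)
      fix i assume "i < ar f" then have "xs!i \<in> set xs" using l by simp
      then show "xs!i \<in> acar A \<times> acar A" using s by (rule subsetD[rotated])
    qed
    then show "\<forall>i<ar f. fst (xs!i) \<in> acar A" "\<forall>i<ar f. snd (xs!i) \<in> acar A" by (auto simp: mem_Times_iff)
  qed
  have m1: "map (\<lambda>(x,y). plus p A x y) xs = map (\<lambda>i. plus p A (fst (xs!i)) (snd (xs!i))) [0..<ar f]"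
    using l by (simp add: list_eq_iff_nth_eq case_prod_beta)
  have m2: "map fst xs = map (\<lambda>i. fst (xs!i)) [0..<ar f]" using l by (simp add: list_eq_iff_nth_eq)
  have m3: "map snd xs = map (\<lambda>i. snd (xs!i)) [0..<ar f]" using l by (simp add: list_eq_iff_nth_eq)
  show ?thesis unfolding m1 m2 m3 using op_plus[OF A a] .
qed

end

theorem lemma1p5:
  fixes ar :: "'f \<Rightarrow> nat" and E :: "(('f, nat) trm \<times> ('f, nat) trm) set"
    and z p :: 'f and A :: "('f, 'a) alg"
  assumes V: "variety ar E" and ent: "entropic ar E" and jt: "jonsson_tarski ar E z p"
    and A: "in_var ar E A"
  shows
    "subalg ar (Inv z p A) A \<and>
    (\<forall>(B :: ('f, 'b) alg) f. in_var ar E B \<and> hom ar A B f \<longrightarrow>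
          hom ar (restr A (Inv z p A)) (restr B (Inv z p B)) f) \<and>
    (\<forall>(B :: ('f, 'b) alg) (T :: ('f, 'c) alg) t. is_tensor ar E A B T t \<longrightarrow>
          (\<forall>b\<in>acar B. hom ar (restr A (Inv z p A)) (restr T (Inv z p T)) (\<lambda>a. t a b))) \<and>
    (\<forall>(B :: ('f, 'b) alg) (T :: ('f, 'c) alg) t (P :: ('f, 'd) alg) s g.
          is_tensor ar E A B T t \<and>
          is_tensor ar E (restr A (Inv z p A)) (restr B (Inv z p B)) P s \<and>
          hom ar P T g \<and> (\<forall>x\<in>Inv z p A. \<forall>y\<in>Inv z p B. g (s x y) = t x y) \<longrightarrow>
          hom ar P (restr T (Inv z p T)) g) \<and>
    (\<forall>(M :: ('f, 'e) alg) (TM :: ('f, 'g) alg) tm m u. monoid_in ar E M TM tm m u \<longrightarrow>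
          (\<forall>a\<in>Inv z p M. \<forall>b\<in>Inv z p M. m (tm a b) \<in> Inv z p M)) \<and>
    (\<forall>(B :: ('f, 'b) alg) f. in_var ar E B \<and> hom ar A B f \<longrightarrow>
          (\<forall>x\<in>Inv z p A. f (neg z p A x) = neg z p B (f x))) \<and>
    (hom ar (restr A (Inv z p A)) (restr A (Inv z p A)) (neg z p A)) \<and>
    (comm_group_obj ar E (restr A (Inv z p A)) (plus p A) (zero z A) (neg z p A)) \<and>
    (\<forall>(G :: ('f, 'h) alg) j m u i. group_obj ar E G m u i \<and> hom ar G A j \<and> inj_on j (acar G)
          \<longrightarrow> j ` acar G \<subseteq> Inv z p A)"
proof -
  interpret JT ar E z p using ent jt by unfold_locales
  let ?IA = "restr A (Inv z p A)"
  have P1: "subalg ar (Inv z p A) A" using subalg_Inv[OF A] .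
  have IAv: "in_var ar E ?IA" using in_var_restr[OF A P1] .
  have P2: "\<forall>(B :: ('f, 'b) alg) f. in_var ar E B \<and> hom ar A B f \<longrightarrow>
          hom ar (restr A (Inv z p A)) (restr B (Inv z p B)) f"
    using hom_restr_Inv[OF A] by blast
  have P3: "\<forall>(B :: ('f, 'b) alg) (T :: ('f, 'c) alg) t. is_tensor ar E A B T t \<longrightarrow>
          (\<forall>b\<in>acar B. hom ar (restr A (Inv z p A)) (restr T (Inv z p T)) (\<lambda>a. t a b))"
  proof (intro allI impI ballI)
    fix B :: "('f, 'b) alg" and T :: "('f, 'c) alg" and t b
    assume H: "is_tensor ar E A B T t" and b: "b \<in> acar B"
    have T: "in_var ar E T" using H unfolding is_tensor_def by blast
    have "hom ar A T (\<lambda>a. t a b)" using H b unfolding is_tensor_def bimor_def by blast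
    then show "hom ar (restr A (Inv z p A)) (restr T (Inv z p T)) (\<lambda>a. t a b)"
      using hom_restr_Inv[OF A T] by blast
  qed
  have P4: "\<forall>(B :: ('f, 'b) alg) (T :: ('f, 'c) alg) t (P :: ('f, 'd) alg) s g.
          is_tensor ar E A B T t \<and>
          is_tensor ar E (restr A (Inv z p A)) (restr B (Inv z p B)) P s \<and>
          hom ar P T g \<and> (\<forall>x\<in>Inv z p A. \<forall>y\<in>Inv z p B. g (s x y) = t x y) \<longrightarrow>
          hom ar P (restr T (Inv z p T)) g"
  proof (intro allI impI)
    fix B :: "('f, 'b) alg" and T :: "('f, 'c) alg" and t and P :: "('f, 'd) alg" and s g
    assume H: "is_tensor ar E A B T t \<and>
          is_tensor ar E (restr A (Inv z p A)) (restr B (Inv z p B)) P s \<and>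
          hom ar P T g \<and> (\<forall>x\<in>Inv z p A. \<forall>y\<in>Inv z p B. g (s x y) = t x y)"
    have T: "in_var ar E T" and B: "in_var ar E B" and bt: "bimor ar A B T t"
      using H unfolding is_tensor_def by blast+
    have Pv: "in_var ar E P" and bs: "bimor ar (restr A (Inv z p A)) (restr B (Inv z p B)) P s"
      using H unfolding is_tensor_def by blast+
    have g: "hom ar P T g" using H by blast
    define S where "S = {x \<in> acar P. g x \<in> Inv z p T}"
    have SS: "subalg ar S P" unfolding subalg_def
    proof (intro conjI allI impI)
      show "S \<subseteq> acar P" unfolding S_def by blast
    next
      fix f xs assume a: "length xs = ar f \<and> set xs \<subseteq> S"
      then have a1: "set xs \<subseteq> acar P" unfolding S_def by blast
      have c: "aop P f xs \<in> acar P" using Pv a a1 unfolding in_var_def is_alg_def by blast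
      have e: "g (aop P f xs) = aop T f (map g xs)" using g a a1 unfolding hom_def by blast
      have "set (map g xs) \<subseteq> Inv z p T" using a unfolding S_def by auto
      then have "aop T f (map g xs) \<in> Inv z p T" using op_Inv_neg[OF T] a by simp
      then show "aop P f xs \<in> S" unfolding S_def using c e by simp
    qed
    have st: "\<forall>a\<in>acar (restr A (Inv z p A)). \<forall>b\<in>acar (restr B (Inv z p B)). s a b \<in> S"
    proof (intro ballI)
      fix a b assume a: "a \<in> acar (restr A (Inv z p A))" and b: "b \<in> acar (restr B (Inv z p B))"
      have a': "a \<in> Inv z p A" and b': "b \<in> Inv z p B" using a b by (auto simp: restr_def)
      have "s a b \<in> acar P" using bs a b unfolding bimor_def hom_def by blast
      moreover have "b \<in> acar B" using b' Inv_sub by (rule subsetD[rotated])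
      then have "hom ar A T (\<lambda>x. t x b)" using bt unfolding bimor_def by blast
      then have "t a b \<in> Inv z p T" using hom_Inv[OF A T _ a'] by blast
      ultimately show "s a b \<in> S" unfolding S_def using H a' b' by simp
    qed
    have "acar P \<subseteq> S" using tensor_gen[OF _ SS st] H by blast
    then show "hom ar P (restr T (Inv z p T)) g" using g unfolding hom_def S_def
      by (auto simp: restr_def)
  qed
  have P5: "\<forall>(M :: ('f, 'e) alg) (TM :: ('f, 'g) alg) tm m u. monoid_in ar E M TM tm m u \<longrightarrow>
          (\<forall>a\<in>Inv z p M. \<forall>b\<in>Inv z p M. m (tm a b) \<in> Inv z p M)"
  proof (intro allI impI ballI)
    fix M :: "('f, 'e) alg" and TM :: "('f, 'g) alg" and tm m u a b
    assume H: "monoid_in ar E M TM tm m u" and a: "a \<in> Inv z p M" and b: "b \<in> Inv z p M"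
    have M: "in_var ar E M" and bt: "bimor ar M M TM tm" and m: "hom ar TM M m"
      using H unfolding monoid_in_def is_tensor_def by blast+
    have "b \<in> acar M" using b Inv_sub by (rule subsetD[rotated])
    then have "hom ar M TM (\<lambda>x. tm x b)" using bt unfolding bimor_def by blast
    then have "hom ar M M (\<lambda>x. m (tm x b))" using hom_comp m by blast
    then show "m (tm a b) \<in> Inv z p M" using hom_Inv[OF M M _ a] by blast
  qed
  have P6: "\<forall>(B :: ('f, 'b) alg) f. in_var ar E B \<and> hom ar A B f \<longrightarrow>
          (\<forall>x\<in>Inv z p A. f (neg z p A x) = neg z p B (f x))"
    using hom_neg[OF A] by blast
  have P7: "hom ar (restr A (Inv z p A)) (restr A (Inv z p A)) (neg z p A)"
    unfolding hom_def
  proof (intro conjI allI impI ballI)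
    fix x assume "x \<in> acar ?IA" then show "neg z p A x \<in> acar ?IA"
      using neg_Inv[OF A] by (simp add: restr_def)
  next
    fix f xs assume "length xs = ar f \<and> set xs \<subseteq> acar ?IA"
    then show "neg z p A (aop ?IA f xs) = aop ?IA f (map (neg z p A) xs)"
      using op_Inv_neg[OF A] by (simp add: restr_def)
  qed
  have zI: "zero z A \<in> Inv z p A" using Inv_iff[OF A] zero_in[OF A] plus_0r[OF A] by blast
  have pI: "plus p A x y \<in> Inv z p A" if "x \<in> Inv z p A" "y \<in> Inv z p A" for x y
  proof -
    have "length [x, y] = ar p" "set [x, y] \<subseteq> Inv z p A" using that arp by auto
    then show ?thesis using op_Inv_neg[OF A] unfolding plus_def by blast
  qed
  have P8: "comm_group_obj ar E (restr A (Inv z p A)) (plus p A) (zero z A) (neg z p A)"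
    unfolding comm_group_obj_def group_obj_def
  proof (intro conjI)
    show "in_var ar E ?IA" using IAv .
    show "hom ar ?IA ?IA (neg z p A)" using P7 .
    show "hom ar (prod_alg ?IA ?IA) ?IA (case_prod (plus p A))"
      unfolding hom_def
    proof (intro conjI allI impI ballI)
      fix x assume "x \<in> acar (prod_alg ?IA ?IA)"
      then show "case_prod (plus p A) x \<in> acar ?IA" using pI by (auto simp: prod_alg_def restr_def)
    next
      fix f xs assume a: "length xs = ar f \<and> set xs \<subseteq> acar (prod_alg ?IA ?IA)"
      then have s1: "set xs \<subseteq> Inv z p A \<times> Inv z p A" by (simp add: prod_alg_def restr_def)
      have "Inv z p A \<times> Inv z p A \<subseteq> acar A \<times> acar A" using Inv_sub[of A] by blast
      then have "set xs \<subseteq> acar A \<times> acar A" using s1 by (rule subset_trans[rotated])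
      then show "case_prod (plus p A) (aop (prod_alg ?IA ?IA) f xs) = aop ?IA f (map (case_prod (plus p A)) xs)"
        using op_plus_list[OF A, of xs f] a by (simp add: prod_alg_def restr_def)
    qed
    show "hom ar term_alg ?IA (\<lambda>_. zero z A)"
      unfolding hom_def
    proof (intro conjI allI impI ballI)
      fix x show "zero z A \<in> acar ?IA" using zI by (simp add: restr_def)
    next
      fix f and xs :: "unit list" assume a: "length xs = ar f \<and> set xs \<subseteq> acar term_alg"
      have "map (\<lambda>_. zero z A) xs = map (\<lambda>i. zero z A) [0..<ar f]" using a
        by (simp add: list_eq_iff_nth_eq)
      then show "zero z A = aop ?IA f (map (\<lambda>_. zero z A) xs)"
        using op_zero[OF A, of f] by (simp add: restr_def)
    qed
    have IAc: "acar ?IA \<subseteq> acar A" using Inv_sub[of A] by (simp add: restr_def)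
    show "\<forall>x\<in>acar ?IA. \<forall>y\<in>acar ?IA. \<forall>w\<in>acar ?IA. plus p A (plus p A x y) w = plus p A x (plus p A y w)"
    proof (intro ballI)
      fix x y w assume "x \<in> acar ?IA" "y \<in> acar ?IA" "w \<in> acar ?IA"
      then have "x \<in> acar A" "y \<in> acar A" "w \<in> acar A" using IAc by (auto dest: subsetD)
      then show "plus p A (plus p A x y) w = plus p A x (plus p A y w)" by (rule plus_assoc[OF A])
    qed
    show "\<forall>x\<in>acar ?IA. plus p A (zero z A) x = x \<and> plus p A x (zero z A) = x"
    proof (intro ballI)
      fix x assume "x \<in> acar ?IA"
      then have "x \<in> acar A" using IAc by (auto dest: subsetD)
      then show "plus p A (zero z A) x = x \<and> plus p A x (zero z A) = x"
        using plus_0l[OF A] plus_0r[OF A] by simp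
    qed
    show "\<forall>x\<in>acar ?IA. plus p A x (neg z p A x) = zero z A \<and> plus p A (neg z p A x) x = zero z A"
    proof (intro ballI)
      fix x assume "x \<in> acar ?IA"
      then have "x \<in> Inv z p A" by (simp add: restr_def)
      then show "plus p A x (neg z p A x) = zero z A \<and> plus p A (neg z p A x) x = zero z A"
        using neg_prop[OF A] by blast
    qed
    show "\<forall>x\<in>acar ?IA. \<forall>y\<in>acar ?IA. plus p A x y = plus p A y x"
    proof (intro ballI)
      fix x y assume "x \<in> acar ?IA" "y \<in> acar ?IA"
      then have "x \<in> acar A" "y \<in> acar A" using IAc by (auto dest: subsetD)
      then show "plus p A x y = plus p A y x" by (rule plus_comm[OF A])
    qed
  qed
  have P9: "\<forall>(G :: ('f, 'h) alg) j m u i. group_obj ar E G m u i \<and> hom ar G A j \<and> inj_on j (acar G)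
          \<longrightarrow> j ` acar G \<subseteq> Inv z p A"
  proof (intro allI impI subsetI)
    fix G :: "('f, 'h) alg" and j m u i y
    assume H: "group_obj ar E G m u i \<and> hom ar G A j \<and> inj_on j (acar G)" and y: "y \<in> j ` acar G"
    then obtain x where x: "x \<in> acar G" and yx: "y = j x" by blast
    have G: "in_var ar E G" and mh: "hom ar (prod_alg G G) G (case_prod m)"
      and uh: "hom ar term_alg G (\<lambda>_. u)" and ih: "hom ar G G i"
      and un: "\<forall>x\<in>acar G. m u x = x \<and> m x u = x"
      and iv: "\<forall>x\<in>acar G. m x (i x) = u \<and> m (i x) x = u"
      and j: "hom ar G A j"
      using H unfolding group_obj_def by blast+
    have u0: "u = zero z G"
    proof -
      have "length ([] :: unit list) = ar z" "set ([] :: unit list) \<subseteq> acar term_alg" using arz by auto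
      then show ?thesis using uh unfolding hom_def zero_def by fastforce
    qed
    have uc: "u \<in> acar G" using u0 zero_in[OF G] by simp
    have mp: "m a b = plus p G a b" if a: "a \<in> acar G" and b: "b \<in> acar G" for a b
    proof -
      have "length [(a, u), (u, b)] = ar p" "set [(a, u), (u, b)] \<subseteq> acar (prod_alg G G)"
        using arp a b uc by (auto simp: prod_alg_def)
      then have "case_prod m (aop (prod_alg G G) p [(a, u), (u, b)]) = aop G p (map (case_prod m) [(a, u), (u, b)])"
        using mh unfolding hom_def by blast
      then have "m (plus p G a u) (plus p G u b) = plus p G (m a u) (m u b)"
        by (simp add: prod_alg_def plus_def)
      then show ?thesis using plus_0r[OF G a] plus_0l[OF G b] un a b u0 by simp
    qed
    have ic: "i x \<in> acar G" using ih x unfolding hom_def by blast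
    have "plus p G x (i x) = zero z G" using mp[OF x ic] iv x u0 by simp
    then have "plus p A (j x) (j (i x)) = zero z A" using hom_plus[OF j x ic] hom_zero[OF j] by simp
    moreover have "j x \<in> acar A" "j (i x) \<in> acar A" using j x ic unfolding hom_def by blast+
    ultimately show "y \<in> Inv z p A" using Inv_iff[OF A] yx by blast
  qed
  show ?thesis using P1 P2 P3 P4 P5 P6 P7 P8 P9 by blast
qed

end
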